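(* Let $r\geqslant 3$ be an odd integer and let $\Gamma\cong\mathbb{Z}_{2r}\oplus\mathbb{Z}_8$. Then there exists an $\mathrm{MRS}_\Gamma(r,8;2)$ in which every row sum and every column sum equals $0_\Gamma$.
   Context: For an abelian group $\Gamma$ of order $abc$, an $\mathrm{MRS}_\Gamma(a,b;c)$ is a collection of $c$ arrays of size $a\times b$ whose entries are the elements of $\Gamma$, each appearing exactly once and in a unique array, such that there are $\omega,\delta\in\Gamma$ with every row sum (in every array) equal to $\omega$ and every column sum (in every array) equal to $\delta$. *)

theory Defs
  imports "HOL-Algebra.Algebra"
begin

text \<open>An MRS_G(a,b;c) in an abelian group G (written multiplicatively in HOL-Algebra,
  so the group operation is the paper's addition and \<one> is 0_G).\<close>

definition MRS :: "('g, 'm) monoid_scheme \<Rightarrow> nat \<Rightarrow> nat \<Rightarrow> nat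
                   \<Rightarrow> (nat \<Rightarrow> nat \<Rightarrow> nat \<Rightarrow> 'g) \<Rightarrow> 'g \<Rightarrow> 'g \<Rightarrow> bool" where
  "MRS G a b c A \<omega> \<delta> \<longleftrightarrow>
     card (carrier G) = a * b * c \<and>
     bij_betw (\<lambda>(k, i, j). A k i j) ({..<c} \<times> {..<a} \<times> {..<b}) (carrier G) \<and>
     (\<forall>k<c. \<forall>i<a. finprod G (\<lambda>j. A k i j) {..<b} = \<omega>) \<and>
     (\<forall>k<c. \<forall>j<b. finprod G (\<lambda>i. A k i j) {..<a} = \<delta>)"

end

theory Submission
  imports Defs
begin
definition tt :: "int list list list" where "tt = [[[0, 0, 1, 0, 0, 1, 0, 0], [1, 1, 1, 0, 1, 1, 0, 1]], [[1, 0, 0, 0, 1, 1, 1, 0], [1, 0, 1, 1, 0, 0, 0, 1]], [[- 1, 0, - 1, 0, - 1, - 2, - 1, 0], [- 2, - 1, - 2, - 1, - 1, - 1, 0, - 2]], [[0, 0, 1, 0, 1, 1, 0, 1], [1, 1, 0, 1, 0, 0, 0, 1]], [[0, 0, - 1, 0, - 1, - 1, 0, - 1], [- 1, - 1, 0, - 1, 0, 0, 0, - 1]]]"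
definition yy :: "int list list list" where "yy = [[[1, 7, 6, 5, 2, 1, 4, 6], [0, 5, 2, 0, 4, 3, 3, 7]], [[2, 1, 3, 6, 2, 0, 4, 6], [6, 5, 7, 5, 1, 4, 3, 1]], [[- 3, - 8, - 9, - 11, - 4, - 1, - 8, - 12], [- 6, - 10, - 9, - 5, - 5, - 7, - 6, - 8]], [[2, 6, 5, 0, 5, 4, 3, 7], [2, 6, 3, 0, 4, 7, 1, 1]], [[- 2, - 6, - 5, 0, - 5, - 4, - 3, - 7], [- 2, - 6, - 3, 0, - 4, - 7, - 1, - 1]]]"
definition T :: "nat \<Rightarrow> nat \<Rightarrow> nat \<Rightarrow> int" where "T s k j = tt ! s ! k ! j"
definition Y :: "nat \<Rightarrow> nat \<Rightarrow> nat \<Rightarrow> int" where "Y s k j = yy ! s ! k ! j"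
definition pt :: "nat \<Rightarrow> nat" where "pt s = [0,2,1,4,3] ! s"
definition rt :: "nat \<Rightarrow> nat \<Rightarrow> nat" where
  "rt m i = (if i = 0 then 0 else if i = 1 then 1 else if i = 2*m then 2 else if i \<le> m then 3 else 4)"
definition ee :: "nat \<Rightarrow> int" where "ee j = (if j < 4 then 1 else -1)"
definition XX :: "nat \<Rightarrow> nat \<Rightarrow> nat \<Rightarrow> nat \<Rightarrow> int" where
  "XX m k i j = (2 * int m + 2) * ee j * int i + (2 * int m + 1) * T (rt m i) k j"
definition FF :: "nat \<Rightarrow> nat \<Rightarrow> nat \<Rightarrow> nat \<Rightarrow> int \<times> int" where
  "FF m k i j = (XX m k i j mod int (2 * (2 * m + 1)), Y (rt m i) k j mod int 8)"

lemma C1: "\<forall>s\<in>set [0..<5]. \<forall>k\<in>set [0..<2]. (\<Sum>j\<leftarrow>[0..<8]. T s k j) mod 2 = 0 \<and> (\<Sum>j\<leftarrow>[0..<8]. Y s k j) mod 8 = 0"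
  unfolding T_def Y_def tt_def yy_def by code_simp

lemma C3: "\<forall>k\<in>set [0..<2]. \<forall>j\<in>set [0..<8]. T 0 k j + T 1 k j + T 2 k j = 0 \<and> T 3 k j + T 4 k j = 0 \<and> Y 0 k j + Y 1 k j + Y 2 k j = 0 \<and> Y 3 k j + Y 4 k j = 0"
  unfolding T_def Y_def tt_def yy_def by code_simp

lemma C4: "\<forall>s\<in>set [0..<5]. \<forall>k\<in>set [0..<2]. \<forall>k'\<in>set [0..<2]. \<forall>j\<in>set [0..<8]. \<forall>j'\<in>set [0..<8].
   (j < 4 \<longleftrightarrow> j' < 4) \<longrightarrow> T s k j mod 2 = T s k' j' mod 2 \<longrightarrow> Y s k j mod 8 = Y s k' j' mod 8 \<longrightarrow> k = k' \<and> j = j'"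
  unfolding T_def Y_def tt_def yy_def by code_simp

lemma C5: "\<forall>s\<in>set [0..<5]. \<forall>k\<in>set [0..<2]. \<forall>k'\<in>set [0..<2]. \<forall>j\<in>set [0..<4]. \<forall>j'\<in>set [4..<8].
   \<not> (T s k j mod 2 = T (pt s) k' j' mod 2 \<and> Y s k j mod 8 = Y (pt s) k' j' mod 8)"
  unfolding T_def Y_def tt_def yy_def pt_def by code_simp

lemma C2: "(\<Sum>j<8. ee j) = 0"
  by (simp add: ee_def eval_nat_numeral)

lemma F1: "s < 5 \<Longrightarrow> k < 2 \<Longrightarrow> (\<Sum>j<8. T s k j) mod 2 = 0 \<and> (\<Sum>j<8. Y s k j) mod 8 = 0"
  using C1 by (simp add: interv_sum_list_conv_sum_set_nat lessThan_atLeast0)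

lemma F3: "k < 2 \<Longrightarrow> j < 8 \<Longrightarrow> T 0 k j + T 1 k j + T 2 k j = 0 \<and> T 3 k j + T 4 k j = 0 \<and> Y 0 k j + Y 1 k j + Y 2 k j = 0 \<and> Y 3 k j + Y 4 k j = 0"
  using C3 by simp

lemma F4: "s < 5 \<Longrightarrow> k < 2 \<Longrightarrow> k' < 2 \<Longrightarrow> j < 8 \<Longrightarrow> j' < 8 \<Longrightarrow> (j < 4 \<longleftrightarrow> j' < 4) \<Longrightarrow>
   T s k j mod 2 = T s k' j' mod 2 \<Longrightarrow> Y s k j mod 8 = Y s k' j' mod 8 \<Longrightarrow> k = k' \<and> j = j'"
  using C4 by simp

lemma F5: assumes "s < 5" "k < 2" "k' < 2" "j < 4" "j' < 8" "4 \<le> j'"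
   "T s k j mod 2 = T (pt s) k' j' mod 2" "Y s k j mod 8 = Y (pt s) k' j' mod 8" shows False
proof -
  have "s \<in> set [0..<5]" "k \<in> set [0..<2]" "k' \<in> set [0..<2]" "j \<in> set [0..<4]" "j' \<in> set [4..<8]"
    using assms by auto
  then show False using C5 assms(7,8) by blast
qed

lemma rt_lt: "rt m i < 5" by (simp add: rt_def)

lemma rt_partner: "1 \<le> m \<Longrightarrow> 0 < i \<Longrightarrow> i < 2*m+1 \<Longrightarrow> rt m (2*m+1-i) = pt (rt m i)"
  by (auto simp: rt_def pt_def)

lemma gauss2: "2 * (\<Sum>i<n. int i) = int n * (int n - 1)"
  by (induction n) (auto simp: algebra_simps)

lemma const_sum: "(\<And>i. i \<in> A \<Longrightarrow> g i = c) \<Longrightarrow> sum g A = of_nat (card A) * (c::int)"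
  by simp

lemma colsum: "1 \<le> m \<Longrightarrow> (\<Sum>i<2*m+1. f (rt m i)) = f 0 + f 1 + f 2 + int (m - 1) * (f 3 + f 4 :: int)"
proof -
  assume m: "1 \<le> m"
  let ?g = "\<lambda>i. f (rt m i)"
  have "(\<Sum>i<2*m+1. ?g i) = (\<Sum>i<2*m. ?g i) + ?g (2*m)" by simp
  also have "(\<Sum>i<2*m. ?g i) = (\<Sum>i\<in>{0..<m+1}. ?g i) + (\<Sum>i\<in>{m+1..<2*m}. ?g i)"
    unfolding lessThan_atLeast0 by (rule sum.atLeastLessThan_concat[symmetric]) (use m in auto)
  also have "(\<Sum>i\<in>{0..<m+1}. ?g i) = ?g 0 + (\<Sum>i\<in>{Suc 0..<m+1}. ?g i)"
    by (rule sum.atLeast_Suc_lessThan) simp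
  also have "(\<Sum>i\<in>{Suc 0..<m+1}. ?g i) = ?g (Suc 0) + (\<Sum>i\<in>{Suc (Suc 0)..<m+1}. ?g i)"
    by (rule sum.atLeast_Suc_lessThan) (use m in simp)
  also have "(\<Sum>i\<in>{Suc (Suc 0)..<m+1}. ?g i) = int (m - 1) * f 3"
    by (subst const_sum[where c = "f 3"]) (auto simp: rt_def)
  also have "(\<Sum>i\<in>{m+1..<2*m}. ?g i) = int (m - 1) * f 4"
    by (subst const_sum[where c = "f 4"]) (auto simp: rt_def)
  finally show ?thesis using m by (simp add: rt_def algebra_simps)
qed

lemma transport:
  fixes G :: "('g, 'm) monoid_scheme"
  assumes G: "comm_group G" and h: "\<psi> \<in> hom (integer_mod_group n \<times>\<times> integer_mod_group p) G"
    and I: "finite I" and n: "n > 0" and p: "p > 0"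
  shows "finprod G (\<lambda>i. \<psi> (g1 i mod int n, g2 i mod int p)) I
         = \<psi> ((\<Sum>i\<in>I. g1 i) mod int n, (\<Sum>i\<in>I. g2 i) mod int p)"
  using I
proof (induction I rule: finite_induct)
  case empty
  interpret gh: group_hom "integer_mod_group n \<times>\<times> integer_mod_group p" G \<psi>
    using G h by (simp add: group_hom_def group_hom_axioms_def DirProd_group comm_group.axioms(2) comm_group_def)
  interpret cG: comm_group G by fact
  have "\<psi> (0, 0) = \<one>\<^bsub>G\<^esub>" using gh.hom_one by simp
  then show ?case by simp
next
  case (insert x F)
  interpret cG: comm_group G by fact
  let ?H = "integer_mod_group n \<times>\<times> integer_mod_group p"
  have cl: "\<And>a b. (a mod int n, b mod int p) \<in> carrier ?H"
    using n p by (simp add: carrier_integer_mod_group)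
  have psi_cl: "\<And>a b. \<psi> (a mod int n, b mod int p) \<in> carrier G"
    using h cl by (auto simp: hom_def)
  have "finprod G (\<lambda>i. \<psi> (g1 i mod int n, g2 i mod int p)) (insert x F)
     = \<psi> (g1 x mod int n, g2 x mod int p) \<otimes>\<^bsub>G\<^esub> finprod G (\<lambda>i. \<psi> (g1 i mod int n, g2 i mod int p)) F"
    using insert psi_cl by (intro cG.finprod_insert) auto
  also have "\<dots> = \<psi> (g1 x mod int n, g2 x mod int p) \<otimes>\<^bsub>G\<^esub> \<psi> ((\<Sum>i\<in>F. g1 i) mod int n, (\<Sum>i\<in>F. g2 i) mod int p)"
    using insert by simp
  also have "\<dots> = \<psi> ((g1 x mod int n, g2 x mod int p) \<otimes>\<^bsub>?H\<^esub> ((\<Sum>i\<in>F. g1 i) mod int n, (\<Sum>i\<in>F. g2 i) mod int p))"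
    using h cl by (simp add: hom_def)
  also have "\<dots> = \<psi> ((\<Sum>i\<in>insert x F. g1 i) mod int n, (\<Sum>i\<in>insert x F. g2 i) mod int p)"
    using insert by (simp add: mod_add_eq)
  finally show ?case .
qed

lemma rowsum:
  assumes "k < 2"
  shows "(\<Sum>j<8. XX m k i j) mod int (2 * (2 * m + 1)) = 0 \<and> (\<Sum>j<8. Y (rt m i) k j) mod 8 = 0"
proof -
  have f: "(\<Sum>j<8. T (rt m i) k j) mod 2 = 0" "(\<Sum>j<8. Y (rt m i) k j) mod 8 = 0"
    using F1[OF rt_lt assms] by auto
  then obtain q where q: "(\<Sum>j<8. T (rt m i) k j) = 2 * q" by (metis dvd_def mod_0_imp_dvd)
  have "(\<Sum>j<8. XX m k i j) = (2 * int m + 2) * int i * (\<Sum>j<8. ee j) + (2 * int m + 1) * (\<Sum>j<8. T (rt m i) k j)"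
    by (simp add: XX_def sum.distrib sum_distrib_left algebra_simps)
  also have "\<dots> = int (2 * (2 * m + 1)) * q" using C2 q by simp
  finally show ?thesis using f by simp
qed

lemma colsum_XX:
  assumes "1 \<le> m" "k < 2" "j < 8"
  shows "(\<Sum>i<2*m+1. XX m k i j) mod int (2 * (2 * m + 1)) = 0 \<and> (\<Sum>i<2*m+1. Y (rt m i) k j) mod 8 = 0"
proof -
  note f3 = F3[OF assms(2,3)]
  have t: "(\<Sum>i<2*m+1. T (rt m i) k j) = 0"
    using colsum[OF assms(1), of "\<lambda>s. T s k j"] f3 by simp
  have y: "(\<Sum>i<2*m+1. Y (rt m i) k j) = 0"
    using colsum[OF assms(1), of "\<lambda>s. Y s k j"] f3 by simp
  have g: "2 * (\<Sum>i<2*m+1. int i) = int (2*m+1) * (int (2*m+1) - 1)" by (rule gauss2)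
  have "(\<Sum>i<2*m+1. XX m k i j) = (2 * int m + 2) * ee j * (\<Sum>i<2*m+1. int i) + (2 * int m + 1) * (\<Sum>i<2*m+1. T (rt m i) k j)"
    by (simp add: XX_def sum.distrib sum_distrib_left algebra_simps)
  also have "\<dots> = (int m + 1) * ee j * (2 * (\<Sum>i<2*m+1. int i))" using t by (simp add: algebra_simps)
  also have "\<dots> = int (2 * (2 * m + 1)) * ((int m + 1) * ee j * int m)" unfolding g by (simp add: algebra_simps)
  finally show ?thesis using y by simp
qed

lemma XX_modR: "XX m k i j mod int (2*m+1) = (ee j * int i) mod int (2*m+1)"
proof -
  have "XX m k i j = ee j * int i + int (2*m+1) * (ee j * int i + T (rt m i) k j)"
    by (simp add: XX_def algebra_simps)
  then show ?thesis by simp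
qed

lemma XX_mod2: "XX m k i j mod 2 = T (rt m i) k j mod 2"
proof -
  have eq: "XX m k i j = T (rt m i) k j + ((int m + 1) * ee j * int i + int m * T (rt m i) k j) * 2"
    by (simp add: XX_def algebra_simps)
  show ?thesis unfolding eq by (rule mod_mult_self1)
qed

lemma dvd_range2: fixes R x :: int assumes "R > 0" "R dvd x" "0 \<le> x" "x < 2 * R" shows "x = 0 \<or> x = R"
proof -
  obtain q where q: "x = R * q" using assms(2) by (auto simp: dvd_def)
  have "0 \<le> q" using assms(1,3) q by (simp add: zero_le_mult_iff)
  moreover have "q < 2" using assms(1,4) q by (metis mult.commute mult_less_cancel_left_pos)
  ultimately have "q = 0 \<or> q = 1" by auto
  then show ?thesis using q by auto
qed

lemma dvd_range1: fixes R x :: int assumes "R dvd x" "\<bar>x\<bar> < R" shows "x = 0"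
  using assms dvd_imp_le_int by force

lemma mixed:
  assumes m: "1 \<le> m" and kk: "k < 2" "k' < 2" and ii: "i < 2*m+1" "i' < 2*m+1"
    and jj: "j < 4" "4 \<le> j'" "j' < 8"
    and e: "int i mod int (2*m+1) = (- int i') mod int (2*m+1)"
    and t: "T (rt m i) k j mod 2 = T (rt m i') k' j' mod 2"
    and y: "Y (rt m i) k j mod 8 = Y (rt m i') k' j' mod 8"
  shows False
proof -
  have "int (2*m+1) dvd int i + int i'" using e by (simp add: mod_eq_dvd_iff)
  then have "int i + int i' = 0 \<or> int i + int i' = int (2*m+1)"
    using ii by (intro dvd_range2) auto
  then show False
  proof
    assume "int i + int i' = 0"
    then have "i = 0" "i' = 0" by auto
    then show False using F5[of 0 k k' j j'] t y kk jj by (simp add: pt_def rt_def)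
  next
    assume a: "int i + int i' = int (2*m+1)"
    then have i': "i' = 2*m+1 - i" and "0 < i" using ii by auto
    then have "rt m i' = pt (rt m i)" using rt_partner[OF m] ii by simp
    then show False using F5[OF rt_lt kk jj(1) jj(3) jj(2)] t y by simp
  qed
qed

lemma inj_core:
  assumes m: "1 \<le> m"
    and kk: "k < 2" "k' < 2" and ii: "i < 2*m+1" "i' < 2*m+1" and jj: "j < 8" "j' < 8"
    and eq: "FF m k i j = FF m k' i' j'"
  shows "k = k' \<and> i = i' \<and> j = j'"
proof -
  let ?R = "int (2*m+1)"
  have x2: "XX m k i j mod (2 * ?R) = XX m k' i' j' mod (2 * ?R)"
    and y: "Y (rt m i) k j mod 8 = Y (rt m i') k' j' mod 8"
    using eq by (simp_all add: FF_def)
  have "XX m k i j mod (2 * ?R) mod ?R = XX m k' i' j' mod (2 * ?R) mod ?R" using x2 by simp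
  moreover have d: "?R dvd 2 * ?R" by (rule dvd_triv_right)
  ultimately have "XX m k i j mod ?R = XX m k' i' j' mod ?R" by (metis mod_mod_cancel)
  then have e: "(ee j * int i) mod ?R = (ee j' * int i') mod ?R" by (metis XX_modR)
  have "XX m k i j mod (2 * ?R) mod 2 = XX m k' i' j' mod (2 * ?R) mod 2" using x2 by simp
  moreover have d2: "(2::int) dvd 2 * ?R" by simp
  ultimately have "XX m k i j mod 2 = XX m k' i' j' mod 2" by (metis mod_mod_cancel)
  then have t: "T (rt m i) k j mod 2 = T (rt m i') k' j' mod 2" by (simp add: XX_mod2)
  show ?thesis
  proof (cases "j < 4 \<longleftrightarrow> j' < 4")
    case True
    then have "ee j = ee j'" by (simp add: ee_def)
    then have "?R dvd ee j * (int i - int i')" using e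
      by (simp add: mod_eq_dvd_iff right_diff_distrib)
    moreover have "ee j = 1 \<or> ee j = -1" by (simp add: ee_def)
    ultimately have "?R dvd (int i - int i')" by (metis dvd_minus_iff mult_1 mult_minus_left)
    then have "int i - int i' = 0" using ii by (intro dvd_range1) auto
    then have "i = i'" by simp
    then show ?thesis using F4[OF rt_lt kk jj True] t y by simp
  next
    case False
    then show ?thesis
    proof (cases "j < 4")
      case True
      then have "4 \<le> j'" using False by simp
      moreover have "int i mod ?R = (- int i') mod ?R" using e True \<open>4 \<le> j'\<close> by (simp add: ee_def)
      ultimately show ?thesis using mixed[OF m kk ii True _ jj(2) _ t y] by simp
    next
      case c: False
      then have "j' < 4" "4 \<le> j" using False by auto
      moreover have "int i' mod ?R = (- int i) mod ?R"
      proof -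
        have "(- int i) mod ?R = int i' mod ?R" using e c \<open>j' < 4\<close> by (simp add: ee_def)
        then show ?thesis by simp
      qed
      ultimately show ?thesis using mixed[OF m kk(2,1) ii(2,1) \<open>j' < 4\<close> _ jj(1) _ t[symmetric] y[symmetric]] by simp
    qed
  qed
qed

lemma inj_FF:
  assumes m: "1 \<le> m"
  shows "inj_on (\<lambda>(k,i,j). FF m k i j) ({..<2} \<times> {..<2*m+1} \<times> {..<8})"
  unfolding inj_on_def using inj_core[OF m] by fastforce

theorem lemma4p8:
  fixes G :: "('g, 'm) monoid_scheme" and r :: nat
  assumes "odd r" and "r \<ge> 3"
    and "comm_group G"
    and "G \<cong> integer_mod_group (2 * r) \<times>\<times> integer_mod_group 8"
  shows "\<exists>A. MRS G r 8 2 A \<one>\<^bsub>G\<^esub> \<one>\<^bsub>G\<^esub>"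
proof -
  obtain m where r: "r = 2*m+1" using assms(1) oddE by blast
  have m: "1 \<le> m" using assms(2) r by simp
  let ?H = "integer_mod_group (2 * (2*m+1)) \<times>\<times> integer_mod_group 8"
  have grp: "group G" using assms(3) comm_group_def by blast
  have "?H \<cong> G" using group.iso_sym[OF grp assms(4)] r by simp
  then obtain \<psi> where psi: "\<psi> \<in> iso ?H G" unfolding is_iso_def by blast
  have hom: "\<psi> \<in> hom ?H G" using psi iso_imp_homomorphism by blast
  have bijpsi: "bij_betw \<psi> (carrier ?H) (carrier G)" using psi by (simp add: iso_def)
  interpret gh: group_hom ?H G \<psi>
    using grp hom by (simp add: group_hom_def group_hom_axioms_def DirProd_group)
  have psi0: "\<psi> (0, 0) = \<one>\<^bsub>G\<^esub>" using gh.hom_one by simp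
  define A where "A = (\<lambda>k i j. \<psi> (FF m k i j))"
  let ?S = "{..<2::nat} \<times> {..<2*m+1} \<times> {..<8::nat}"
  let ?F = "\<lambda>(k,i,j). FF m k i j"
  have carH: "carrier ?H = {0..<int (2*(2*m+1))} \<times> {0..<8}"
    by (simp add: carrier_integer_mod_group)
  have inj: "inj_on ?F ?S" using inj_FF[OF m] .
  have sub: "?F ` ?S \<subseteq> carrier ?H"
    unfolding carH by (auto simp: FF_def)
  have cardS: "card ?S = 2 * (2*m+1) * 8" by (simp add: card_cartesian_product)
  have cardH: "card (carrier ?H) = 2 * (2*m+1) * 8" unfolding carH by (simp add: card_cartesian_product)
  have "?F ` ?S = carrier ?H"
  proof (rule card_subset_eq)
    show "finite (carrier ?H)" unfolding carH by simp
    show "?F ` ?S \<subseteq> carrier ?H" by (rule sub)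
    show "card (?F ` ?S) = card (carrier ?H)" using card_image[OF inj] cardS cardH by simp
  qed
  then have bijF: "bij_betw ?F ?S (carrier ?H)" using inj by (simp add: bij_betw_def)
  have eqA: "(\<lambda>(k, i, j). A k i j) = \<psi> \<circ> ?F" by (auto simp: A_def fun_eq_iff)
  have bijA: "bij_betw (\<lambda>(k, i, j). A k i j) ?S (carrier G)"
    unfolding eqA using bijF bijpsi by (rule bij_betw_trans)
  have cardG: "card (carrier G) = r * 8 * 2"
    using bij_betw_same_card[OF bijA] cardS r by simp
  have rows: "\<forall>k<2. \<forall>i<r. finprod G (\<lambda>j. A k i j) {..<8} = \<one>\<^bsub>G\<^esub>"
  proof (intro allI impI)
    fix k i :: nat assume k: "k < 2" and "i < r"
    have "finprod G (\<lambda>j. A k i j) {..<8}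
        = \<psi> ((\<Sum>j<8. XX m k i j) mod int (2*(2*m+1)), (\<Sum>j<8. Y (rt m i) k j) mod int 8)"
      unfolding A_def FF_def by (rule transport[OF assms(3) hom]) auto
    also have "\<dots> = \<psi> (0, 0)" using rowsum[OF k, of m i] by simp
    finally show "finprod G (\<lambda>j. A k i j) {..<8} = \<one>\<^bsub>G\<^esub>" using psi0 by simp
  qed
  have cols: "\<forall>k<2. \<forall>j<8. finprod G (\<lambda>i. A k i j) {..<r} = \<one>\<^bsub>G\<^esub>"
  proof (intro allI impI)
    fix k j :: nat assume k: "k < (2::nat)" and j: "j < (8::nat)"
    have "finprod G (\<lambda>i. A k i j) {..<2*m+1}
        = \<psi> ((\<Sum>i<2*m+1. XX m k i j) mod int (2*(2*m+1)), (\<Sum>i<2*m+1. Y (rt m i) k j) mod int 8)"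
      unfolding A_def FF_def by (rule transport[OF assms(3) hom]) auto
    also have "\<dots> = \<psi> (0, 0)" using colsum_XX[OF m k j] by simp
    finally show "finprod G (\<lambda>i. A k i j) {..<r} = \<one>\<^bsub>G\<^esub>" using psi0 r by simp
  qed
  have "MRS G r 8 2 A \<one>\<^bsub>G\<^esub> \<one>\<^bsub>G\<^esub>"
    unfolding MRS_def using cardG bijA rows cols r by simp
  then show ?thesis by blast
qed
end
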